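(* Let $Q$ be a polyhedral partially ordered abelian group, $M$ a $Q$-module, and $\tau,\tau'$ faces of $Q_+$. Then $(\Gamma_{\tau'}M)_\tau=\Gamma_{\tau'}(M_\tau)$, and both sides are $0$ unless $\tau'\supseteq\tau$.
   Context: A partially ordered abelian group is an abelian group $Q$ generated by a submonoid $Q_+$ whose only unit is $0$; $q\preceq q'$ iff $q'-q\in Q_+$. A face is a submonoid $\sigma\subseteq Q_+$ with $Q_+\setminus\sigma$ an ideal of $Q_+$; $Q$ is polyhedral if it has finitely many faces. A $Q$-module is a $Q$-graded module over $k[Q_+]$ ($k$ a field). For a face $\tau$, $\mathbb Z\tau$ is the subgroup generated by $\tau$ and the localization along $\tau$ is $M_\tau=M\otimes_{k[Q_+]}k[Q_++\mathbb Z\tau]$. The submodule globally supported on $\tau'$ is $\Gamma_{\tau'}M=\bigcap_{\tau''\not\subseteq\tau'}\ker(M\to M_{\tau''})$, over faces $\tau''$ not contained in $\tau'$. *)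

theory Defs
  imports Main
begin

definition po_group :: "'q::ab_group_add set \<Rightarrow> bool" where
  "po_group Qp \<longleftrightarrow>
     0 \<in> Qp \<and> (\<forall>a\<in>Qp. \<forall>b\<in>Qp. a + b \<in> Qp) \<and>
     (\<forall>a\<in>Qp. - a \<in> Qp \<longrightarrow> a = 0) \<and>
     (\<forall>x. \<exists>a\<in>Qp. \<exists>b\<in>Qp. x = a - b)"

definition face :: "'q::ab_group_add set \<Rightarrow> 'q set \<Rightarrow> bool" where
  "face Qp \<sigma> \<longleftrightarrow>
     \<sigma> \<subseteq> Qp \<and> 0 \<in> \<sigma> \<and> (\<forall>a\<in>\<sigma>. \<forall>b\<in>\<sigma>. a + b \<in> \<sigma>) \<and>
     (\<forall>a\<in>Qp - \<sigma>. \<forall>b\<in>Qp. a + b \<in> Qp - \<sigma>)"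

definition polyhedral :: "'q::ab_group_add set \<Rightarrow> bool" where
  "polyhedral Qp \<longleftrightarrow> finite {\<sigma>. face Qp \<sigma>}"

text \<open>A Q-module (Q-graded k[Q_+]-module) is given degreewise: for each degree q a
  k-vector space (mcar q, mzero q, madd q, msmul q), and for a in Q_+ the action
  of the monomial x^a as a map mact a q : M_q \<rightarrow> M_(q+a).\<close>

record ('q, 'k, 'v) qmod =
  mcar  :: "'q \<Rightarrow> 'v set"
  mzero :: "'q \<Rightarrow> 'v"
  madd  :: "'q \<Rightarrow> 'v \<Rightarrow> 'v \<Rightarrow> 'v"
  msmul :: "'q \<Rightarrow> 'k \<Rightarrow> 'v \<Rightarrow> 'v"
  mact  :: "'q \<Rightarrow> 'q \<Rightarrow> 'v \<Rightarrow> 'v"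

definition qmodule :: "'q::ab_group_add set \<Rightarrow> ('q, 'k::field, 'v, 'z) qmod_scheme \<Rightarrow> bool" where
  "qmodule Qp M \<longleftrightarrow>
    (\<forall>q. let V = mcar M q; z = mzero M q; p = madd M q; s = msmul M q in
       z \<in> V \<and>
       (\<forall>x\<in>V. \<forall>y\<in>V. p x y \<in> V) \<and>
       (\<forall>c. \<forall>x\<in>V. s c x \<in> V) \<and>
       (\<forall>x\<in>V. \<forall>y\<in>V. \<forall>w\<in>V. p (p x y) w = p x (p y w)) \<and>
       (\<forall>x\<in>V. \<forall>y\<in>V. p x y = p y x) \<and>
       (\<forall>x\<in>V. p z x = x) \<and>
       (\<forall>x\<in>V. \<exists>y\<in>V. p x y = z) \<and>
       (\<forall>x\<in>V. s 1 x = x) \<and>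
       (\<forall>c d. \<forall>x\<in>V. s c (s d x) = s (c * d) x) \<and>
       (\<forall>c d. \<forall>x\<in>V. s (c + d) x = p (s c x) (s d x)) \<and>
       (\<forall>c. \<forall>x\<in>V. \<forall>y\<in>V. s c (p x y) = p (s c x) (s c y))) \<and>
    (\<forall>q. \<forall>a\<in>Qp. \<forall>x\<in>mcar M q. mact M a q x \<in> mcar M (q + a)) \<and>
    (\<forall>q. \<forall>x\<in>mcar M q. mact M 0 q x = x) \<and>
    (\<forall>q. \<forall>a\<in>Qp. \<forall>b\<in>Qp. \<forall>x\<in>mcar M q.
        mact M b (q + a) (mact M a q x) = mact M (a + b) q x) \<and>
    (\<forall>q. \<forall>a\<in>Qp. \<forall>x\<in>mcar M q. \<forall>y\<in>mcar M q.
        mact M a q (madd M q x y) = madd M (q + a) (mact M a q x) (mact M a q y)) \<and>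
    (\<forall>q. \<forall>a\<in>Qp. \<forall>c. \<forall>x\<in>mcar M q.
        mact M a q (msmul M q c x) = msmul M (q + a) c (mact M a q x))"

text \<open>M_tau = M \<otimes> k[Q_+ + Z tau], i.e. monomials x^t (t in tau) are inverted.
  Its degree-q part consists of fractions m / x^t with t in tau and m in M_(q+t);
  m/x^t = m'/x^t' iff x^(s+t') m = x^(s+t) m' for some s in tau.
  Fractions are represented as equivalence classes of pairs (t, m).\<close>

definition loc_cls :: "'q::ab_group_add set \<Rightarrow> ('q, 'k, 'v, 'z) qmod_scheme \<Rightarrow> 'q \<Rightarrow> 'q \<Rightarrow> 'v \<Rightarrow> ('q \<times> 'v) set" where
  "loc_cls \<tau> M q t m =
     {(t', m'). t' \<in> \<tau> \<and> m' \<in> mcar M (q + t') \<and>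
        (\<exists>s\<in>\<tau>. mact M (s + t') (q + t) m = mact M (s + t) (q + t') m')}"

definition loc_car :: "'q::ab_group_add set \<Rightarrow> ('q, 'k, 'v, 'z) qmod_scheme \<Rightarrow> 'q \<Rightarrow> ('q \<times> 'v) set set" where
  "loc_car \<tau> M q = {loc_cls \<tau> M q t m | t m. t \<in> \<tau> \<and> m \<in> mcar M (q + t)}"

definition rep :: "('q \<times> 'v) set \<Rightarrow> 'q \<times> 'v" where
  "rep X = (SOME p. p \<in> X)"

definition loc :: "'q::ab_group_add set \<Rightarrow> ('q, 'k::field, 'v, 'z) qmod_scheme \<Rightarrow> ('q, 'k, ('q \<times> 'v) set) qmod" where
  "loc \<tau> M =
    \<lparr> mcar = loc_car \<tau> M,
      mzero = (\<lambda>q. loc_cls \<tau> M q 0 (mzero M q)),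
      madd = (\<lambda>q X Y. case rep X of (t, m) \<Rightarrow> case rep Y of (t', m') \<Rightarrow>
                 loc_cls \<tau> M q (t + t')
                   (madd M (q + (t + t')) (mact M t' (q + t) m) (mact M t (q + t') m'))),
      msmul = (\<lambda>q c X. case rep X of (t, m) \<Rightarrow> loc_cls \<tau> M q t (msmul M (q + t) c m)),
      mact = (\<lambda>a q X. case rep X of (t, m) \<Rightarrow> loc_cls \<tau> M (q + a) t (mact M a (q + t) m)) \<rparr>"

text \<open>The natural map N_tau \<rightarrow> M_tau induced by a submodule N \<subseteq> M (same operations,
  smaller carriers): the class of (t, m) in N_tau goes to the class of (t, m) in M_tau.\<close>
definition loc_map :: "'q::ab_group_add set \<Rightarrow> ('q, 'k, 'v, 'z) qmod_scheme \<Rightarrow> 'q \<Rightarrow> ('q \<times> 'v) set \<Rightarrow> ('q \<times> 'v) set" where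
  "loc_map \<tau> M q X = (case rep X of (t, m) \<Rightarrow> loc_cls \<tau> M q t m)"

text \<open>Gamma_tau' M = intersection over faces tau'' not contained in tau' of the kernels
  of the localization maps M \<rightarrow> M_tau'', m \<mapsto> m/1.\<close>
definition Gamma :: "'q::ab_group_add set \<Rightarrow> 'q set \<Rightarrow> ('q, 'k, 'v, 'z) qmod_scheme \<Rightarrow> ('q, 'k, 'v, 'z) qmod_scheme" where
  "Gamma Qp \<tau>' M = M\<lparr> mcar := (\<lambda>q. {m \<in> mcar M q. \<forall>\<tau>''. face Qp \<tau>'' \<and> \<not> \<tau>'' \<subseteq> \<tau>' \<longrightarrow>
        loc_cls \<tau>'' M q 0 m = loc_cls \<tau>'' M q 0 (mzero M q)}) \<rparr>"

end

theory Submission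
  imports Defs
begin

definition cls :: "'q::ab_group_add set \<Rightarrow> ('q \<Rightarrow> 'v set) \<Rightarrow> ('q \<Rightarrow> 'q \<Rightarrow> 'v \<Rightarrow> 'v) \<Rightarrow> 'q \<Rightarrow> 'q \<Rightarrow> 'v \<Rightarrow> ('q \<times> 'v) set" where
  "cls \<sigma> car act q t m = {(t', m'). t' \<in> \<sigma> \<and> m' \<in> car (q + t') \<and>
        (\<exists>s\<in>\<sigma>. act (s + t') (q + t) m = act (s + t) (q + t') m')}"

definition lcar :: "'q::ab_group_add set \<Rightarrow> ('q \<Rightarrow> 'v set) \<Rightarrow> ('q \<Rightarrow> 'q \<Rightarrow> 'v \<Rightarrow> 'v) \<Rightarrow> 'q \<Rightarrow> ('q \<times> 'v) set set" where
  "lcar \<sigma> car act q = {cls \<sigma> car act q t m | t m. t \<in> \<sigma> \<and> m \<in> car (q + t)}"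

definition lact :: "'q::ab_group_add set \<Rightarrow> ('q \<Rightarrow> 'v set) \<Rightarrow> ('q \<Rightarrow> 'q \<Rightarrow> 'v \<Rightarrow> 'v) \<Rightarrow> 'q \<Rightarrow> 'q \<Rightarrow> ('q \<times> 'v) set \<Rightarrow> ('q \<times> 'v) set" where
  "lact \<sigma> car act a q X = (case rep X of (t, m) \<Rightarrow> cls \<sigma> car act (q + a) t (act a (q + t) m))"

definition lz :: "'q::ab_group_add set \<Rightarrow> ('q \<Rightarrow> 'v set) \<Rightarrow> ('q \<Rightarrow> 'q \<Rightarrow> 'v \<Rightarrow> 'v) \<Rightarrow> ('q \<Rightarrow> 'v) \<Rightarrow> 'q \<Rightarrow> ('q \<times> 'v) set" where
  "lz \<sigma> car act z q = cls \<sigma> car act q 0 (z q)"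

lemma face_sub: "face Qp \<sigma> \<Longrightarrow> s \<in> \<sigma> \<Longrightarrow> s \<in> Qp"
  unfolding face_def by blast
lemma face_0: "face Qp \<sigma> \<Longrightarrow> 0 \<in> \<sigma>"
  unfolding face_def by blast
lemma face_add: "face Qp \<sigma> \<Longrightarrow> a \<in> \<sigma> \<Longrightarrow> b \<in> \<sigma> \<Longrightarrow> a + b \<in> \<sigma>"
  unfolding face_def by blast

locale astr =
  fixes Qp :: "'q::ab_group_add set" and car :: "'q \<Rightarrow> 'v set"
    and act :: "'q \<Rightarrow> 'q \<Rightarrow> 'v \<Rightarrow> 'v" and z :: "'q \<Rightarrow> 'v"
  assumes act_car: "a \<in> Qp \<Longrightarrow> x \<in> car q \<Longrightarrow> act a q x \<in> car (q + a)"
    and act_0: "x \<in> car q \<Longrightarrow> act 0 q x = x"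
    and act_comp: "a \<in> Qp \<Longrightarrow> b \<in> Qp \<Longrightarrow> x \<in> car q \<Longrightarrow> act b (q + a) (act a q x) = act (a + b) q x"
    and z_car: "z q \<in> car q"
    and act_z: "a \<in> Qp \<Longrightarrow> act a q (z q) = z (q + a)"
    and Qp_add: "a \<in> Qp \<Longrightarrow> b \<in> Qp \<Longrightarrow> a + b \<in> Qp"
begin

lemma comp': "a \<in> Qp \<Longrightarrow> b \<in> Qp \<Longrightarrow> x \<in> car p \<Longrightarrow> p2 = p + a \<Longrightarrow> c = a + b \<Longrightarrow>
   act b p2 (act a p x) = act c p x"
  using act_comp by blast

lemma car': "a \<in> Qp \<Longrightarrow> x \<in> car q \<Longrightarrow> p = q + a \<Longrightarrow> act a q x \<in> car p"
  using act_car by blast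

lemma act_z': "a \<in> Qp \<Longrightarrow> p = q + a \<Longrightarrow> act a q (z q) = z p"
  using act_z by blast

context
  fixes \<sigma> assumes F: "face Qp \<sigma>"
begin

lemma sQ: "s \<in> \<sigma> \<Longrightarrow> s \<in> Qp" using face_sub[OF F] .
lemma s0: "0 \<in> \<sigma>" using face_0[OF F] .
lemma sadd: "a \<in> \<sigma> \<Longrightarrow> b \<in> \<sigma> \<Longrightarrow> a + b \<in> \<sigma>" using face_add[OF F] .

lemma cls_refl: "t \<in> \<sigma> \<Longrightarrow> m \<in> car (q + t) \<Longrightarrow> (t, m) \<in> cls \<sigma> car act q t m"
  unfolding cls_def using s0 by auto

lemma cls_sym: "(t', m') \<in> cls \<sigma> car act q t m \<Longrightarrow> t \<in> \<sigma> \<Longrightarrow> m \<in> car (q + t) \<Longrightarrow>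
    (t, m) \<in> cls \<sigma> car act q t' m'"
  unfolding cls_def by (auto, metis)

lemma cls_trans:
  assumes 1: "(t', m') \<in> cls \<sigma> car act q t m" and 2: "(t'', m'') \<in> cls \<sigma> car act q t' m'"
    and t: "t \<in> \<sigma>" and m: "m \<in> car (q + t)"
  shows "(t'', m'') \<in> cls \<sigma> car act q t m"
proof -
  from 1 obtain s where t': "t' \<in> \<sigma>" and m': "m' \<in> car (q + t')" and s: "s \<in> \<sigma>"
    and e1: "act (s + t') (q + t) m = act (s + t) (q + t') m'"
    unfolding cls_def by auto
  from 2 obtain s' where t'': "t'' \<in> \<sigma>" and m'': "m'' \<in> car (q + t'')" and s': "s' \<in> \<sigma>"
    and e2: "act (s' + t'') (q + t') m' = act (s' + t') (q + t'') m''"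
    unfolding cls_def by auto
  define r where "r = s + s' + t'"
  have r: "r \<in> \<sigma>" unfolding r_def using s s' t' sadd by blast
  have Q: "s \<in> Qp" "s' \<in> Qp" "t \<in> Qp" "t' \<in> Qp" "t'' \<in> Qp" using sQ s s' t t' t'' by auto
  have QQ: "s + t' \<in> Qp" "s + t \<in> Qp" "s' + t'' \<in> Qp" "s' + t' \<in> Qp"
    using sQ sadd s s' t t' t'' by auto
  have "act (r + t'') (q + t) m = act (s' + t'') (q + t + (s + t')) (act (s + t') (q + t) m)"
    by (rule comp'[symmetric]) (use QQ m in \<open>auto simp: r_def algebra_simps\<close>)
  also have "\<dots> = act (s' + t'') (q + t' + (s + t)) (act (s + t) (q + t') m')"
    by (simp add: e1 algebra_simps)
  also have "\<dots> = act (s + t) (q + t' + (s' + t'')) (act (s' + t'') (q + t') m')"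
    by (rule trans[OF comp' comp'[symmetric]]) (use QQ m' in \<open>auto simp: algebra_simps\<close>)
  also have "\<dots> = act (s + t) (q + t'' + (s' + t')) (act (s' + t') (q + t'') m'')"
    by (simp add: e2 algebra_simps)
  also have "\<dots> = act (r + t) (q + t'') m''"
    by (rule comp') (use QQ m'' in \<open>auto simp: r_def algebra_simps\<close>)
  finally show ?thesis unfolding cls_def using r t'' m'' by auto
qed

lemma cls_eq:
  assumes "t \<in> \<sigma>" "m \<in> car (q + t)" "t' \<in> \<sigma>" "m' \<in> car (q + t')"
  shows "cls \<sigma> car act q t m = cls \<sigma> car act q t' m' \<longleftrightarrow> (t', m') \<in> cls \<sigma> car act q t m"
proof
  assume "cls \<sigma> car act q t m = cls \<sigma> car act q t' m'"
  then show "(t', m') \<in> cls \<sigma> car act q t m" using cls_refl assms by auto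
next
  assume h: "(t', m') \<in> cls \<sigma> car act q t m"
  have h': "(t, m) \<in> cls \<sigma> car act q t' m'" using cls_sym[OF h] assms by auto
  show "cls \<sigma> car act q t m = cls \<sigma> car act q t' m'"
  proof (intro set_eqI iffI)
    fix p assume "p \<in> cls \<sigma> car act q t m"
    then show "p \<in> cls \<sigma> car act q t' m'"
      using cls_trans[OF h' _ assms(3,4)] by (cases p) auto
  next
    fix p assume "p \<in> cls \<sigma> car act q t' m'"
    then show "p \<in> cls \<sigma> car act q t m"
      using cls_trans[OF h _ assms(1,2)] by (cases p) auto
  qed
qed

lemma cls_zero_iff:
  assumes t: "t \<in> \<sigma>" and m: "m \<in> car (q + t)"
  shows "cls \<sigma> car act q t m = cls \<sigma> car act q 0 (z q) \<longleftrightarrow> (\<exists>u\<in>\<sigma>. act u (q + t) m = z (q + t + u))"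
proof -
  have zc: "z q \<in> car (q + 0)" using z_car by simp
  have "cls \<sigma> car act q t m = cls \<sigma> car act q 0 (z q) \<longleftrightarrow> (0, z q) \<in> cls \<sigma> car act q t m"
    by (rule cls_eq[OF t m s0 zc])
  also have "\<dots> \<longleftrightarrow> (\<exists>u\<in>\<sigma>. act u (q + t) m = z (q + t + u))"
  proof -
    have "act (s + t) (q + 0) (z q) = z (q + t + s)" if "s \<in> \<sigma>" for s
      using act_z'[of "s + t" "q + t + s" q] sQ sadd that t by (simp add: algebra_simps)
    then show ?thesis unfolding cls_def using s0 zc by auto
  qed
  finally show ?thesis .
qed

lemma rep_in: "t \<in> \<sigma> \<Longrightarrow> m \<in> car (q + t) \<Longrightarrow> rep (cls \<sigma> car act q t m) \<in> cls \<sigma> car act q t m"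
  unfolding rep_def by (rule someI) (rule cls_refl)

lemma lact_cls:
  assumes a: "a \<in> Qp" and t: "t \<in> \<sigma>" and m: "m \<in> car (q + t)"
  shows "lact \<sigma> car act a q (cls \<sigma> car act q t m) = cls \<sigma> car act (q + a) t (act a (q + t) m)"
proof -
  obtain t1 m1 where r: "rep (cls \<sigma> car act q t m) = (t1, m1)" by (cases "rep (cls \<sigma> car act q t m)")
  have "(t1, m1) \<in> cls \<sigma> car act q t m" using rep_in[OF t m] r by simp
  then obtain s where t1: "t1 \<in> \<sigma>" and m1: "m1 \<in> car (q + t1)" and s: "s \<in> \<sigma>"
    and e: "act (s + t1) (q + t) m = act (s + t) (q + t1) m1"
    unfolding cls_def by auto
  have c1: "act a (q + t1) m1 \<in> car (q + a + t1)" by (rule car'[OF a m1]) (simp add: algebra_simps)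
  have c2: "act a (q + t) m \<in> car (q + a + t)" by (rule car'[OF a m]) (simp add: algebra_simps)
  have QQ: "s + t \<in> Qp" "s + t1 \<in> Qp" using sQ sadd s t t1 by auto
  have "act (s + t) (q + a + t1) (act a (q + t1) m1) = act a (q + t1 + (s + t)) (act (s + t) (q + t1) m1)"
    by (rule trans[OF comp' comp'[symmetric]]) (use QQ a m1 in \<open>auto simp: algebra_simps\<close>)
  also have "\<dots> = act a (q + t + (s + t1)) (act (s + t1) (q + t) m)"
    by (simp add: e algebra_simps)
  also have "\<dots> = act (s + t1) (q + a + t) (act a (q + t) m)"
    by (rule trans[OF comp' comp'[symmetric]]) (use QQ a m in \<open>auto simp: algebra_simps\<close>)
  finally have "(t, act a (q + t) m) \<in> cls \<sigma> car act (q + a) t1 (act a (q + t1) m1)"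
    unfolding cls_def using s t c2 by auto
  then have "cls \<sigma> car act (q + a) t1 (act a (q + t1) m1) = cls \<sigma> car act (q + a) t (act a (q + t) m)"
    using cls_eq[OF t1 c1 t c2] by simp
  then show ?thesis unfolding lact_def r by simp
qed

lemma L_astr: "astr Qp (lcar \<sigma> car act) (lact \<sigma> car act) (lz \<sigma> car act z)"
proof
  fix a q X assume a: "a \<in> Qp" and X: "X \<in> lcar \<sigma> car act q"
  then obtain t m where t: "t \<in> \<sigma>" and m: "m \<in> car (q + t)" and XX: "X = cls \<sigma> car act q t m"
    unfolding lcar_def by auto
  have "act a (q + t) m \<in> car (q + a + t)" by (rule car'[OF a m]) (simp add: algebra_simps)
  then show "lact \<sigma> car act a q X \<in> lcar \<sigma> car act (q + a)"
    unfolding XX lact_cls[OF a t m] lcar_def using t by auto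
next
  fix q X assume X: "X \<in> lcar \<sigma> car act q"
  then obtain t m where t: "t \<in> \<sigma>" and m: "m \<in> car (q + t)" and XX: "X = cls \<sigma> car act q t m"
    unfolding lcar_def by auto
  show "lact \<sigma> car act 0 q X = X"
    unfolding XX lact_cls[OF sQ[OF s0] t m] using act_0[OF m] by simp
next
  fix a b q X assume a: "a \<in> Qp" and b: "b \<in> Qp" and X: "X \<in> lcar \<sigma> car act q"
  then obtain t m where t: "t \<in> \<sigma>" and m: "m \<in> car (q + t)" and XX: "X = cls \<sigma> car act q t m"
    unfolding lcar_def by auto
  have c: "act a (q + t) m \<in> car (q + a + t)" by (rule car'[OF a m]) (simp add: algebra_simps)
  have ab: "a + b \<in> Qp" using Qp_add a b by blast
  have e: "act b (q + a + t) (act a (q + t) m) = act (a + b) (q + t) m"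
    by (rule comp') (use a b m in \<open>auto simp: algebra_simps\<close>)
  show "lact \<sigma> car act b (q + a) (lact \<sigma> car act a q X) = lact \<sigma> car act (a + b) q X"
    unfolding XX lact_cls[OF a t m] lact_cls[OF b t c] e lact_cls[OF ab t m]
    by (simp add: add.assoc)
next
  fix q show "lz \<sigma> car act z q \<in> lcar \<sigma> car act q"
    unfolding lz_def lcar_def using s0 z_car by force
next
  fix a q assume a: "a \<in> Qp"
  have zc: "z q \<in> car (q + 0)" using z_car by simp
  show "lact \<sigma> car act a q (lz \<sigma> car act z q) = lz \<sigma> car act z (q + a)"
    unfolding lz_def lact_cls[OF a s0 zc] using act_z[OF a, of q] by simp
next
  fix a b assume "a \<in> Qp" "b \<in> Qp" then show "a + b \<in> Qp" by (rule Qp_add)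
qed

end
end

definition gcar :: "'q::ab_group_add set set \<Rightarrow> ('q \<Rightarrow> 'v set) \<Rightarrow> ('q \<Rightarrow> 'q \<Rightarrow> 'v \<Rightarrow> 'v) \<Rightarrow> ('q \<Rightarrow> 'v) \<Rightarrow> 'q \<Rightarrow> 'v set" where
  "gcar F car act z q = {m \<in> car q. \<forall>\<sigma>\<in>F. \<exists>s\<in>\<sigma>. act s q m = z (q + s)}"

lemma sum_in_face: assumes "face Qp \<sigma>" "finite S" "\<forall>x\<in>S. f x \<in> \<sigma>" shows "sum f S \<in> \<sigma>"
  using assms(2,3,1)
proof (induction S rule: finite_induct)
  case empty then show ?case using face_0 by simp
next
  case (insert x S) then show ?case using face_add[of Qp \<sigma>] by simp
qed

lemma (in astr) main:
  assumes tau: "face Qp \<tau>" and fin: "finite F" and Ff: "\<forall>\<sigma>\<in>F. face Qp \<sigma>"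
  shows "bij_betw (\<lambda>X. case rep X of (t, m) \<Rightarrow> cls \<tau> car act q t m) (lcar \<tau> (gcar F car act z) act q)
           {X \<in> lcar \<tau> car act q. \<forall>\<sigma>\<in>F. \<exists>u\<in>\<sigma>. lact \<tau> car act u q X = lz \<tau> car act z (q + u)}
       \<and> (\<tau> \<in> F \<longrightarrow> lcar \<tau> (gcar F car act z) act q = {cls \<tau> (gcar F car act z) act q 0 (z q)}
             \<and> {X \<in> lcar \<tau> car act q. \<forall>\<sigma>\<in>F. \<exists>u\<in>\<sigma>. lact \<tau> car act u q X = lz \<tau> car act z (q + u)}
                 = {lz \<tau> car act z q})"
  (is "bij_betw ?f ?A ?B \<and> _")
proof -
  let ?G = "gcar F car act z"
  interpret IL: astr Qp "lcar \<tau> car act" "lact \<tau> car act" "lz \<tau> car act z" by (rule L_astr[OF tau])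
  have tQ: "x \<in> \<tau> \<Longrightarrow> x \<in> Qp" for x using face_sub[OF tau] .
  have clsG: "cls \<tau> ?G act p t m = cls \<tau> car act p t m \<inter> {(t', m'). m' \<in> ?G (p + t')}" for p t m
    unfolding cls_def gcar_def by auto
  have Gc: "?G p \<subseteq> car p" for p unfolding gcar_def by auto
  have fmap: "?f (cls \<tau> ?G act q t m) = cls \<tau> car act q t m" if t: "t \<in> \<tau>" and m: "m \<in> ?G (q + t)" for t m
  proof -
    have mc: "m \<in> car (q + t)" using m Gc by auto
    have "(t, m) \<in> cls \<tau> ?G act q t m" unfolding clsG using cls_refl[OF tau t mc] m by auto
    then have "rep (cls \<tau> ?G act q t m) \<in> cls \<tau> ?G act q t m" unfolding rep_def by (rule someI)
    then obtain t1 m1 where r: "rep (cls \<tau> ?G act q t m) = (t1, m1)" and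
       h: "(t1, m1) \<in> cls \<tau> car act q t m" unfolding clsG by (cases "rep (cls \<tau> ?G act q t m)") auto
    then have t1: "t1 \<in> \<tau>" and m1: "m1 \<in> car (q + t1)" unfolding cls_def by auto
    have "cls \<tau> car act q t m = cls \<tau> car act q t1 m1" using cls_eq[OF tau t mc t1 m1] h by simp
    then show ?thesis using r by simp
  qed
  have lchar: "lact \<tau> car act u p (cls \<tau> car act p t m) = lz \<tau> car act z (p + u) \<longleftrightarrow>
      (\<exists>v\<in>\<tau>. act (u + v) (p + t) m = z (p + t + (u + v)))"
    if u: "u \<in> Qp" and t: "t \<in> \<tau>" and m: "m \<in> car (p + t)" for u p t m
  proof -
    have c: "act u (p + t) m \<in> car (p + u + t)" by (rule car'[OF u m]) (simp add: algebra_simps)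
    have "lact \<tau> car act u p (cls \<tau> car act p t m) = lz \<tau> car act z (p + u) \<longleftrightarrow>
        (\<exists>v\<in>\<tau>. act v (p + u + t) (act u (p + t) m) = z (p + u + t + v))"
      unfolding lact_cls[OF tau u t m] lz_def by (rule cls_zero_iff[OF tau t c])
    also have "\<dots> \<longleftrightarrow> (\<exists>v\<in>\<tau>. act (u + v) (p + t) m = z (p + t + (u + v)))"
    proof -
      have "act v (p + u + t) (act u (p + t) m) = act (u + v) (p + t) m" if "v \<in> \<tau>" for v
        by (rule comp') (use u m tQ that in \<open>auto simp: algebra_simps\<close>)
      moreover have pe: "p + u + t + v = p + t + (u + v)" for v by (simp add: algebra_simps)
      ultimately show ?thesis by (simp only: pe) auto
    qed
    finally show ?thesis .
  qed
  have bij: "bij_betw ?f ?A ?B"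
  proof (rule bij_betw_imageI)
    show "inj_on ?f ?A"
    proof
      fix X Y assume X: "X \<in> ?A" and Y: "Y \<in> ?A" and e: "?f X = ?f Y"
      from X obtain t m where t: "t \<in> \<tau>" and m: "m \<in> ?G (q + t)" and XX: "X = cls \<tau> ?G act q t m"
        unfolding lcar_def by auto
      from Y obtain t' m' where t': "t' \<in> \<tau>" and m': "m' \<in> ?G (q + t')" and YY: "Y = cls \<tau> ?G act q t' m'"
        unfolding lcar_def by auto
      have "cls \<tau> car act q t m = cls \<tau> car act q t' m'" using e fmap[OF t m] fmap[OF t' m'] XX YY by simp
      then show "X = Y" unfolding XX YY clsG by simp
    qed
  next
    show "?f ` ?A = ?B"
    proof (intro set_eqI iffI)
      fix Y assume "Y \<in> ?f ` ?A"
      then obtain X where X: "X \<in> ?A" and YY: "Y = ?f X" by auto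
      from X obtain t m where t: "t \<in> \<tau>" and m: "m \<in> ?G (q + t)" and XX: "X = cls \<tau> ?G act q t m"
        unfolding lcar_def by auto
      have mc: "m \<in> car (q + t)" using m Gc by auto
      have Y: "Y = cls \<tau> car act q t m" using YY XX fmap[OF t m] by simp
      show "Y \<in> ?B"
      proof (simp, intro conjI ballI)
        show "Y \<in> lcar \<tau> car act q" unfolding Y lcar_def using t mc by auto
      next
        fix \<sigma> assume sF: "\<sigma> \<in> F"
        then obtain s where s: "s \<in> \<sigma>" and e: "act s (q + t) m = z (q + t + s)"
          using m unfolding gcar_def by auto
        have sQ': "s \<in> Qp" using face_sub Ff sF s by blast
        have "\<exists>v\<in>\<tau>. act (s + v) (q + t) m = z (q + t + (s + v))"
          using e face_0[OF tau] by (intro bexI[of _ 0]) auto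
        then show "\<exists>u\<in>\<sigma>. lact \<tau> car act u q Y = lz \<tau> car act z (q + u)"
          unfolding Y using lchar[OF sQ' t mc] s by blast
      qed
    next
      fix Y assume Y: "Y \<in> ?B"
      then obtain t m where t: "t \<in> \<tau>" and m: "m \<in> car (q + t)" and YY: "Y = cls \<tau> car act q t m"
        unfolding lcar_def by auto
      have "\<forall>\<sigma>\<in>F. \<exists>u. \<exists>v. u \<in> \<sigma> \<and> v \<in> \<tau> \<and> act (u + v) (q + t) m = z (q + t + (u + v))"
      proof
        fix \<sigma> assume sF: "\<sigma> \<in> F"
        then obtain u where u: "u \<in> \<sigma>" and e: "lact \<tau> car act u q Y = lz \<tau> car act z (q + u)" using Y by auto
        have uQ: "u \<in> Qp" using face_sub Ff sF u by blast
        show "\<exists>u. \<exists>v. u \<in> \<sigma> \<and> v \<in> \<tau> \<and> act (u + v) (q + t) m = z (q + t + (u + v))"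
          using e lchar[OF uQ t m] u unfolding YY by blast
      qed
      then obtain uf vf where uv: "\<forall>\<sigma>\<in>F. uf \<sigma> \<in> \<sigma> \<and> vf \<sigma> \<in> \<tau> \<and>
          act (uf \<sigma> + vf \<sigma>) (q + t) m = z (q + t + (uf \<sigma> + vf \<sigma>))" by metis
      define U where "U = sum vf F"
      have U: "U \<in> \<tau>" unfolding U_def using sum_in_face[OF tau fin] uv by blast
      define m' where "m' = act U (q + t) m"
      have m'c: "m' \<in> car (q + (t + U))" unfolding m'_def by (rule car'[OF tQ[OF U] m]) (simp add: algebra_simps)
      have m'G: "m' \<in> ?G (q + (t + U))"
        unfolding gcar_def
      proof (simp add: m'c, intro ballI)
        fix \<sigma> assume sF: "\<sigma> \<in> F"
        have fs: "face Qp \<sigma>" using Ff sF by blast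
        define W where "W = sum vf (F - {\<sigma>})"
        have W: "W \<in> \<tau>" unfolding W_def using sum_in_face[OF tau] fin uv by blast
        have UW: "U = vf \<sigma> + W" unfolding U_def W_def using sum.remove[OF fin sF] by simp
        have us: "uf \<sigma> \<in> Qp" "vf \<sigma> \<in> Qp" using uv sF face_sub[OF fs] tQ by auto
        have uvQ: "uf \<sigma> + vf \<sigma> \<in> Qp" using us Qp_add by blast
        have "act (uf \<sigma>) (q + (t + U)) m' = act (U + uf \<sigma>) (q + t) m"
          unfolding m'_def by (rule comp') (use us tQ[OF U] m in \<open>auto simp: algebra_simps\<close>)
        also have "\<dots> = act W (q + t + (uf \<sigma> + vf \<sigma>)) (act (uf \<sigma> + vf \<sigma>) (q + t) m)"
          by (rule comp'[symmetric]) (use uvQ tQ[OF W] m in \<open>auto simp: UW algebra_simps\<close>)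
        also have "\<dots> = act W (q + t + (uf \<sigma> + vf \<sigma>)) (z (q + t + (uf \<sigma> + vf \<sigma>)))"
          using uv sF by simp
        also have "\<dots> = z (q + (t + U) + uf \<sigma>)"
          by (rule act_z') (use tQ[OF W] in \<open>auto simp: UW algebra_simps\<close>)
        finally show "\<exists>s\<in>\<sigma>. act s (q + (t + U)) m' = z (q + (t + U) + s)"
          using uv sF by blast
      qed
      have tU: "t + U \<in> \<tau>" using face_add[OF tau t U] .
      have "act (0 + t) (q + (t + U)) m' = act (0 + (t + U)) (q + t) m"
        unfolding m'_def by (rule comp') (use tQ[OF U] tQ[OF t] m in \<open>auto simp: algebra_simps\<close>)
      then have "(t, m) \<in> cls \<tau> car act q (t + U) m'"
        unfolding cls_def using face_0[OF tau] t m by blast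
      then have e: "cls \<tau> car act q (t + U) m' = Y"
        unfolding YY using cls_eq[OF tau tU m'c t m] by simp
      have "cls \<tau> ?G act q (t + U) m' \<in> ?A" unfolding lcar_def using tU m'G by blast
      moreover have "?f (cls \<tau> ?G act q (t + U) m') = Y" using fmap[OF tU m'G] e by simp
      ultimately show "Y \<in> ?f ` ?A" by force
    qed
  qed
  have part2: "lcar \<tau> ?G act q = {cls \<tau> ?G act q 0 (z q)} \<and> ?B = {lz \<tau> car act z q}" if tF: "\<tau> \<in> F"
  proof
    have zG: "z p \<in> ?G p" for p
      unfolding gcar_def using z_car act_z Ff face_0 face_sub by blast
    have zG0: "z q \<in> ?G (q + 0)" using zG[of q] by simp
    have zc0: "z q \<in> car (q + 0)" using z_car[of q] by simp
    show "lcar \<tau> ?G act q = {cls \<tau> ?G act q 0 (z q)}"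
    proof (intro set_eqI iffI)
      fix X assume "X \<in> lcar \<tau> ?G act q"
      then obtain t m where t: "t \<in> \<tau>" and m: "m \<in> ?G (q + t)" and XX: "X = cls \<tau> ?G act q t m"
        unfolding lcar_def by auto
      have mc: "m \<in> car (q + t)" using m Gc by auto
      obtain s where "s \<in> \<tau>" "act s (q + t) m = z (q + t + s)" using m tF unfolding gcar_def by auto
      then have "cls \<tau> car act q t m = cls \<tau> car act q 0 (z q)" using cls_zero_iff[OF tau t mc] by blast
      then show "X \<in> {cls \<tau> ?G act q 0 (z q)}" unfolding XX clsG by simp
    next
      fix X assume "X \<in> {cls \<tau> ?G act q 0 (z q)}"
      then show "X \<in> lcar \<tau> ?G act q" unfolding lcar_def using face_0[OF tau] zG0 by blast
    qed
  next
    show "?B = {lz \<tau> car act z q}"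
    proof (intro set_eqI iffI)
      fix Y assume Y: "Y \<in> ?B"
      then obtain t m where t: "t \<in> \<tau>" and m: "m \<in> car (q + t)" and YY: "Y = cls \<tau> car act q t m"
        unfolding lcar_def by auto
      obtain u where u: "u \<in> \<tau>" and e: "lact \<tau> car act u q Y = lz \<tau> car act z (q + u)" using Y tF by auto
      obtain v where v: "v \<in> \<tau>" and e2: "act (u + v) (q + t) m = z (q + t + (u + v))"
        using e lchar[OF tQ[OF u] t m] unfolding YY by blast
      have "cls \<tau> car act q t m = cls \<tau> car act q 0 (z q)"
        using cls_zero_iff[OF tau t m] face_add[OF tau u v] e2 by blast
      then show "Y \<in> {lz \<tau> car act z q}" unfolding YY lz_def by simp
    next
      fix Y assume "Y \<in> {lz \<tau> car act z q}"
      then have YY: "Y = lz \<tau> car act z q" by simp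
      have "lact \<tau> car act 0 q Y = lz \<tau> car act z (q + 0)" unfolding YY using IL.act_0[OF IL.z_car] by simp
      have "\<forall>\<sigma>\<in>F. \<exists>u\<in>\<sigma>. lact \<tau> car act u q Y = lz \<tau> car act z (q + u)"
      proof
        fix \<sigma> assume "\<sigma> \<in> F"
        then have "0 \<in> \<sigma>" using Ff face_0 by blast
        then show "\<exists>u\<in>\<sigma>. lact \<tau> car act u q Y = lz \<tau> car act z (q + u)"
          using \<open>lact \<tau> car act 0 q Y = lz \<tau> car act z (q + 0)\<close> by blast
      qed
      then show "Y \<in> ?B" using YY IL.z_car by auto
    qed
  qed
  show ?thesis using bij part2 by blast
qed

lemma qmod_parts:
  assumes Q: "qmodule Qp M"
  shows "\<And>q. mzero M q \<in> mcar M q"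
    "\<And>q x y. x \<in> mcar M q \<Longrightarrow> y \<in> mcar M q \<Longrightarrow> madd M q x y \<in> mcar M q"
    "\<And>q x y w. x \<in> mcar M q \<Longrightarrow> y \<in> mcar M q \<Longrightarrow> w \<in> mcar M q \<Longrightarrow>
        madd M q (madd M q x y) w = madd M q x (madd M q y w)"
    "\<And>q x y. x \<in> mcar M q \<Longrightarrow> y \<in> mcar M q \<Longrightarrow> madd M q x y = madd M q y x"
    "\<And>q x. x \<in> mcar M q \<Longrightarrow> madd M q (mzero M q) x = x"
    "\<And>q x. x \<in> mcar M q \<Longrightarrow> \<exists>y\<in>mcar M q. madd M q x y = mzero M q"
    "\<And>q a x. a \<in> Qp \<Longrightarrow> x \<in> mcar M q \<Longrightarrow> mact M a q x \<in> mcar M (q + a)"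
    "\<And>q x. x \<in> mcar M q \<Longrightarrow> mact M 0 q x = x"
    "\<And>q a b x. a \<in> Qp \<Longrightarrow> b \<in> Qp \<Longrightarrow> x \<in> mcar M q \<Longrightarrow> mact M b (q + a) (mact M a q x) = mact M (a + b) q x"
    "\<And>q a x y. a \<in> Qp \<Longrightarrow> x \<in> mcar M q \<Longrightarrow> y \<in> mcar M q \<Longrightarrow>
        mact M a q (madd M q x y) = madd M (q + a) (mact M a q x) (mact M a q y)"
proof -
  note c = Q[unfolded qmodule_def Let_def]
  note c1 = c[THEN conjunct1]
  note c2 = c[THEN conjunct2, THEN conjunct1]
  note c3 = c[THEN conjunct2, THEN conjunct2, THEN conjunct1]
  note c4 = c[THEN conjunct2, THEN conjunct2, THEN conjunct2, THEN conjunct1]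
  note c5 = c[THEN conjunct2, THEN conjunct2, THEN conjunct2, THEN conjunct2, THEN conjunct1]
  fix q
  note d = c1[THEN spec[of _ q]]
  show "\<And>q. mzero M q \<in> mcar M q" using c1 by meson
  show "\<And>q x y. x \<in> mcar M q \<Longrightarrow> y \<in> mcar M q \<Longrightarrow> madd M q x y \<in> mcar M q" using c1 by meson
  show "\<And>q x y w. x \<in> mcar M q \<Longrightarrow> y \<in> mcar M q \<Longrightarrow> w \<in> mcar M q \<Longrightarrow>
        madd M q (madd M q x y) w = madd M q x (madd M q y w)" using c1 by meson
  show "\<And>q x y. x \<in> mcar M q \<Longrightarrow> y \<in> mcar M q \<Longrightarrow> madd M q x y = madd M q y x" using c1 by meson
  show "\<And>q x. x \<in> mcar M q \<Longrightarrow> madd M q (mzero M q) x = x" using c1 by meson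
  show "\<And>q x. x \<in> mcar M q \<Longrightarrow> \<exists>y\<in>mcar M q. madd M q x y = mzero M q" using c1 by meson
  show "\<And>q a x. a \<in> Qp \<Longrightarrow> x \<in> mcar M q \<Longrightarrow> mact M a q x \<in> mcar M (q + a)" using c2 by blast
  show "\<And>q x. x \<in> mcar M q \<Longrightarrow> mact M 0 q x = x" using c3 by blast
  show "\<And>q a b x. a \<in> Qp \<Longrightarrow> b \<in> Qp \<Longrightarrow> x \<in> mcar M q \<Longrightarrow> mact M b (q + a) (mact M a q x) = mact M (a + b) q x" using c4 by blast
  show "\<And>q a x y. a \<in> Qp \<Longrightarrow> x \<in> mcar M q \<Longrightarrow> y \<in> mcar M q \<Longrightarrow>
        mact M a q (madd M q x y) = madd M (q + a) (mact M a q x) (mact M a q y)" using c5 by blast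
qed

lemma qmod_astr:
  assumes P: "po_group Qp" and Q: "qmodule Qp M"
  shows "astr Qp (mcar M) (mact M) (mzero M)"
proof
  note V = qmod_parts[OF Q]
  fix a q x assume "a \<in> Qp" "x \<in> mcar M q" then show "mact M a q x \<in> mcar M (q + a)"
    by (rule V(7))
next
  note V = qmod_parts[OF Q]
  fix q x assume "x \<in> mcar M q" then show "mact M 0 q x = x" by (rule V(8))
next
  note V = qmod_parts[OF Q]
  fix a b q x assume "a \<in> Qp" "b \<in> Qp" "x \<in> mcar M q"
  then show "mact M b (q + a) (mact M a q x) = mact M (a + b) q x" by (rule V(9))
next
  note V = qmod_parts[OF Q]
  fix q show "mzero M q \<in> mcar M q" by (rule V(1))
next
  fix a b assume "a \<in> Qp" "b \<in> Qp" then show "a + b \<in> Qp" using P unfolding po_group_def by blast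
next
  note V = qmod_parts[OF Q]
  fix a q assume a: "a \<in> Qp"
  let ?z = "mzero M q" and ?p = "madd M (q + a)" and ?z' = "mzero M (q + a)"
  have ac: "mact M a q ?z \<in> mcar M (q + a)" using V(7)[OF a V(1)] .
  define y where "y = mact M a q ?z"
  have yy: "y = ?p y y" unfolding y_def using V(10)[OF a V(1) V(1)] V(5)[OF V(1)] by simp
  obtain y' where y': "y' \<in> mcar M (q + a)" "?p y y' = ?z'" using V(6) ac unfolding y_def by blast
  have yc: "y \<in> mcar M (q + a)" using ac y_def by simp
  have "?z' = ?p (?p y y) y'" using yy y' by simp
  also have "\<dots> = ?p y ?z'" using V(3)[OF yc yc y'(1)] y' by simp
  also have "\<dots> = y" using V(4)[OF yc V(1)] V(5)[OF yc] by simp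
  finally show "mact M a q (mzero M q) = mzero M (q + a)" unfolding y_def by simp
qed

lemma loc_cls_eq: "loc_cls \<sigma> M = cls \<sigma> (mcar M) (mact M)"
  unfolding loc_cls_def cls_def by (intro ext) simp

lemma loc_simps:
  "mcar (loc \<tau> M) = lcar \<tau> (mcar M) (mact M)"
  "mact (loc \<tau> M) = lact \<tau> (mcar M) (mact M)"
  "mzero (loc \<tau> M) = lz \<tau> (mcar M) (mact M) (mzero M)"
  unfolding loc_def loc_car_def lcar_def lact_def lz_def loc_cls_eq by (auto intro!: ext)

lemma Gamma_simps:
  "mcar (Gamma Qp \<tau>' M) = (\<lambda>q. {m \<in> mcar M q. \<forall>\<tau>''. face Qp \<tau>'' \<and> \<not> \<tau>'' \<subseteq> \<tau>' \<longrightarrow>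
        cls \<tau>'' (mcar M) (mact M) q 0 m = cls \<tau>'' (mcar M) (mact M) q 0 (mzero M q)})"
  "mact (Gamma Qp \<tau>' M) = mact M"
  "mzero (Gamma Qp \<tau>' M) = mzero M"
  unfolding Gamma_def loc_cls_eq by simp_all

lemma loc_map_eq: "loc_map \<tau> M q = (\<lambda>X. case rep X of (t, m) \<Rightarrow> cls \<tau> (mcar M) (mact M) q t m)"
  unfolding loc_map_def loc_cls_eq by simp

theorem proposition4p6:
  fixes Qp :: "'q::ab_group_add set" and M :: "('q, 'k::field, 'v) qmod"
    and \<tau> \<tau>' :: "'q set"
  assumes "po_group Qp" and "polyhedral Qp" and "qmodule Qp M"
    and "face Qp \<tau>" and "face Qp \<tau>'"
  shows "(\<forall>q. bij_betw (loc_map \<tau> M q) (mcar (loc \<tau> (Gamma Qp \<tau>' M)) q)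
                                       (mcar (Gamma Qp \<tau>' (loc \<tau> M)) q))
       \<and> (\<not> \<tau> \<subseteq> \<tau>' \<longrightarrow>
            (\<forall>q. mcar (loc \<tau> (Gamma Qp \<tau>' M)) q = {mzero (loc \<tau> (Gamma Qp \<tau>' M)) q}
               \<and> mcar (Gamma Qp \<tau>' (loc \<tau> M)) q = {mzero (loc \<tau> M) q}))"
proof -
  interpret I: astr Qp "mcar M" "mact M" "mzero M" by (rule qmod_astr) fact+
  interpret IL: astr Qp "lcar \<tau> (mcar M) (mact M)" "lact \<tau> (mcar M) (mact M)" "lz \<tau> (mcar M) (mact M) (mzero M)"
    by (rule I.L_astr) fact
  define F where "F = {\<sigma>. face Qp \<sigma> \<and> \<not> \<sigma> \<subseteq> \<tau>'}"
  have fin: "finite F" using \<open>polyhedral Qp\<close> unfolding polyhedral_def F_def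
    by (rule finite_subset[rotated]) auto
  have Ff: "\<forall>\<sigma>\<in>F. face Qp \<sigma>" unfolding F_def by auto
  have G: "mcar (Gamma Qp \<tau>' M) = gcar F (mcar M) (mact M) (mzero M)"
  proof (intro ext set_eqI)
    fix q m
    have "m \<in> mcar M q \<Longrightarrow> face Qp \<sigma> \<Longrightarrow>
       cls \<sigma> (mcar M) (mact M) q 0 m = cls \<sigma> (mcar M) (mact M) q 0 (mzero M q) \<longleftrightarrow>
       (\<exists>s\<in>\<sigma>. mact M s q m = mzero M (q + s))" for \<sigma>
      using I.cls_zero_iff[of \<sigma> 0 m q] face_0[of Qp \<sigma>] by simp
    then show "m \<in> mcar (Gamma Qp \<tau>' M) q \<longleftrightarrow> m \<in> gcar F (mcar M) (mact M) (mzero M) q"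
      unfolding Gamma_simps gcar_def F_def mem_Collect_eq Ball_def by blast
  qed
  have GL: "mcar (Gamma Qp \<tau>' (loc \<tau> M)) q =
     {X \<in> lcar \<tau> (mcar M) (mact M) q. \<forall>\<sigma>\<in>F. \<exists>u\<in>\<sigma>. lact \<tau> (mcar M) (mact M) u q X = lz \<tau> (mcar M) (mact M) (mzero M) (q + u)}"
    for q
  proof -
    have "X \<in> lcar \<tau> (mcar M) (mact M) q \<Longrightarrow> face Qp \<sigma> \<Longrightarrow>
       cls \<sigma> (lcar \<tau> (mcar M) (mact M)) (lact \<tau> (mcar M) (mact M)) q 0 X =
       cls \<sigma> (lcar \<tau> (mcar M) (mact M)) (lact \<tau> (mcar M) (mact M)) q 0 (lz \<tau> (mcar M) (mact M) (mzero M) q) \<longleftrightarrow>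
       (\<exists>u\<in>\<sigma>. lact \<tau> (mcar M) (mact M) u q X = lz \<tau> (mcar M) (mact M) (mzero M) (q + u))" for \<sigma> X
      using IL.cls_zero_iff[of \<sigma> 0 X q] face_0[of Qp \<sigma>] by simp
    then show ?thesis unfolding Gamma_simps loc_simps F_def mem_Collect_eq Ball_def by blast
  qed
  have LG: "mcar (loc \<tau> (Gamma Qp \<tau>' M)) = lcar \<tau> (gcar F (mcar M) (mact M) (mzero M)) (mact M)"
    unfolding loc_simps Gamma_simps(2) G ..
  have LGz: "mzero (loc \<tau> (Gamma Qp \<tau>' M)) q = cls \<tau> (gcar F (mcar M) (mact M) (mzero M)) (mact M) q 0 (mzero M q)" for q
    unfolding loc_simps Gamma_simps(2,3) G lz_def ..
  have tF: "\<not> \<tau> \<subseteq> \<tau>' \<Longrightarrow> \<tau> \<in> F" unfolding F_def using \<open>face Qp \<tau>\<close> by auto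
  have P1: "bij_betw (loc_map \<tau> M q) (mcar (loc \<tau> (Gamma Qp \<tau>' M)) q) (mcar (Gamma Qp \<tau>' (loc \<tau> M)) q)" for q
    unfolding LG GL loc_map_eq by (rule conjunct1[OF I.main[OF \<open>face Qp \<tau>\<close> fin Ff]])
  have P2: "mcar (loc \<tau> (Gamma Qp \<tau>' M)) q = {mzero (loc \<tau> (Gamma Qp \<tau>' M)) q} \<and>
        mcar (Gamma Qp \<tau>' (loc \<tau> M)) q = {mzero (loc \<tau> M) q}" if nt: "\<not> \<tau> \<subseteq> \<tau>'" for q
  proof -
    have h: "lcar \<tau> (gcar F (mcar M) (mact M) (mzero M)) (mact M) q = {cls \<tau> (gcar F (mcar M) (mact M) (mzero M)) (mact M) q 0 (mzero M q)} \<and>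
       {X \<in> lcar \<tau> (mcar M) (mact M) q. \<forall>\<sigma>\<in>F. \<exists>u\<in>\<sigma>. lact \<tau> (mcar M) (mact M) u q X = lz \<tau> (mcar M) (mact M) (mzero M) (q + u)}
        = {lz \<tau> (mcar M) (mact M) (mzero M) q}"
      by (rule mp[OF conjunct2[OF I.main[OF \<open>face Qp \<tau>\<close> fin Ff, of q]] tF[OF nt]])
    show ?thesis
      unfolding LG LGz GL unfolding loc_simps(3) by (rule h)
  qed
  show ?thesis using P1 P2 by blast
qed

end
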